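(* Let $\mathcal{H}$ be a complex Hilbert space, $A\in\mathcal{B}(\mathcal{H})$ positive and $S\in\mathcal{B}_A(\mathcal{H})$. Then $$d\omega_A^2(S)\le \omega_A^2\left(S^{\sharp_A}S+S\right)+\left\|\left(S^{\sharp_A}S\right)^2+S^{\sharp_A}S\right\|_A .$$
   Context: $\mathcal{B}(\mathcal{H})$ denotes the bounded linear operators on $\mathcal{H}$. For positive $A$, $\langle x,z\rangle_A=\langle Ax,z\rangle$ and $\|z\|_A=\|A^{1/2}z\|$. $\mathcal{B}_A(\mathcal{H})$ is the set of $S\in\mathcal{B}(\mathcal{H})$ for which some $R\in\mathcal{B}(\mathcal{H})$ satisfies $AR=S^*A$; for such $S$, $S^{\sharp_A}=A^{\dagger}S^*A$ with $A^\dagger$ the Moore–Penrose inverse of $A$. For operators $T$ bounded with respect to $\|\cdot\|_A$: $\|T\|_A=\sup_{\|z\|_A=1}\|Tz\|_A$, $\omega_A(T)=\sup_{\|z\|_A=1}|\langle Tz,z\rangle_A|$, and $d\omega_A(T)=\sup_{\|z\|_A=1}(|\langle Tz,z\rangle_A|^2+\|Tz\|_A^4)^{1/2}$. *)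

theory Defs
  imports "HOL-Analysis.Analysis"
begin

class complex_inner = real_normed_vector +
  fixes scaleC :: "complex \<Rightarrow> 'a \<Rightarrow> 'a"
  fixes cinner :: "'a \<Rightarrow> 'a \<Rightarrow> complex"
  assumes scaleC_add_right: "scaleC a (x + y) = scaleC a x + scaleC a y"
    and scaleC_add_left: "scaleC (a + b) x = scaleC a x + scaleC b x"
    and scaleC_scaleC: "scaleC a (scaleC b x) = scaleC (a * b) x"
    and scaleC_one: "scaleC 1 x = x"
    and scaleC_of_real: "scaleC (complex_of_real r) x = scaleR r x"
    and cinner_commute: "cinner x y = cnj (cinner y x)"
    and cinner_add_left: "cinner (x + y) z = cinner x z + cinner y z"
    and cinner_scaleC_left: "cinner (scaleC c x) y = c * cinner x y"
    and cinner_self_nonneg: "0 \<le> Re (cinner x x)"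
    and cinner_self_eq_zero: "cinner x x = 0 \<longleftrightarrow> x = 0"
    and norm_eq_sqrt_cinner: "norm x = sqrt (Re (cinner x x))"

class chilbert_space = complex_inner + complete_space

definition bounded_clinear :: "('a::complex_inner \<Rightarrow> 'a) \<Rightarrow> bool" where
  "bounded_clinear f \<longleftrightarrow>
     (\<forall>x y. f (x + y) = f x + f y) \<and> (\<forall>c x. f (scaleC c x) = scaleC c (f x)) \<and>
     (\<exists>K. \<forall>x. norm (f x) \<le> norm x * K)"

definition positive_op :: "('a::complex_inner \<Rightarrow> 'a) \<Rightarrow> bool" where
  "positive_op A \<longleftrightarrow> bounded_clinear A \<and>
     (\<forall>x. Im (cinner (A x) x) = 0 \<and> 0 \<le> Re (cinner (A x) x))"

definition adj :: "('a::complex_inner \<Rightarrow> 'a) \<Rightarrow> ('a \<Rightarrow> 'a)" where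
  "adj S = (THE T. \<forall>x y. cinner (S x) y = cinner x (T y))"

text \<open>Moore--Penrose inverse of A, on the range of A: the unique preimage orthogonal
  to the null space of A.\<close>
definition mp_inv :: "('a::complex_inner \<Rightarrow> 'a) \<Rightarrow> 'a \<Rightarrow> 'a" where
  "mp_inv A z = (THE y. (\<forall>w. A w = 0 \<longrightarrow> cinner y w = 0) \<and> A y = z)"

definition BA :: "('a::complex_inner \<Rightarrow> 'a) \<Rightarrow> ('a \<Rightarrow> 'a) set" where
  "BA A = {S. bounded_clinear S \<and> (\<exists>R. bounded_clinear R \<and> A \<circ> R = adj S \<circ> A)}"

definition sharpA :: "('a::complex_inner \<Rightarrow> 'a) \<Rightarrow> ('a \<Rightarrow> 'a) \<Rightarrow> ('a \<Rightarrow> 'a)" where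
  "sharpA A S = mp_inv A \<circ> adj S \<circ> A"

definition ainner :: "('a::complex_inner \<Rightarrow> 'a) \<Rightarrow> 'a \<Rightarrow> 'a \<Rightarrow> complex" where
  "ainner A x z = cinner (A x) z"

definition anorm :: "('a::complex_inner \<Rightarrow> 'a) \<Rightarrow> 'a \<Rightarrow> real" where
  "anorm A z = sqrt (Re (cinner (A z) z))"

text \<open>Suprema over the A-unit sphere; 0 is adjoined (all quantities are nonnegative),
  which only matters in the degenerate case of an empty sphere (A = 0).\<close>
definition opnormA :: "('a::complex_inner \<Rightarrow> 'a) \<Rightarrow> ('a \<Rightarrow> 'a) \<Rightarrow> real" where
  "opnormA A T = Sup ({0} \<union> {anorm A (T z) | z. anorm A z = 1})"

definition omegaA :: "('a::complex_inner \<Rightarrow> 'a) \<Rightarrow> ('a \<Rightarrow> 'a) \<Rightarrow> real" where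
  "omegaA A T = Sup ({0} \<union> {cmod (ainner A (T z) z) | z. anorm A z = 1})"

definition domegaA :: "('a::complex_inner \<Rightarrow> 'a) \<Rightarrow> ('a \<Rightarrow> 'a) \<Rightarrow> real" where
  "domegaA A T = Sup ({0} \<union>
     {sqrt ((cmod (ainner A (T z) z))\<^sup>2 + (anorm A (T z)) ^ 4) | z. anorm A z = 1})"

end

theory Submission
  imports Defs
begin

lemma cinner_zero_left [simp]: "cinner (0::'a::complex_inner) y = 0"
  using cinner_add_left[of 0 0 y] by simp

lemma cinner_zero_right [simp]: "cinner x (0::'a::complex_inner) = 0"
  using cinner_commute[of x 0] by simp

lemma scaleC_minus1: "scaleC (-1) (x::'a::complex_inner) = - x"
  using scaleC_of_real[of "-1" x] by simp

lemma scaleR_scaleC: "scaleR r (x::'a::complex_inner) = scaleC (complex_of_real r) x"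
  by (simp add: scaleC_of_real)

lemma cinner_minus_left [simp]: "cinner (- (x::'a::complex_inner)) y = - cinner x y"
  using cinner_scaleC_left[of "-1" x y] by (simp add: scaleC_minus1)

lemma cinner_diff_left: "cinner ((x::'a::complex_inner) - y) z = cinner x z - cinner y z"
  using cinner_add_left[of x "-y" z] by simp

lemma cinner_add_right: "cinner (x::'a::complex_inner) (y + z) = cinner x y + cinner x z"
  by (metis cinner_commute cinner_add_left complex_cnj_add)

lemma cinner_scaleC_right: "cinner (x::'a::complex_inner) (scaleC c y) = cnj c * cinner x y"
  by (metis cinner_commute cinner_scaleC_left complex_cnj_mult)

lemma cinner_minus_right [simp]: "cinner (x::'a::complex_inner) (- y) = - cinner x y"
  by (metis cinner_commute cinner_minus_left complex_cnj_minus)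

lemma cinner_diff_right: "cinner (x::'a::complex_inner) (y - z) = cinner x y - cinner x z"
  using cinner_add_right[of x y "-z"] by simp

lemma cinner_self_Im: "Im (cinner (x::'a::complex_inner) x) = 0"
  using cinner_commute[of x x] by (metis Im_complex_div_lemma Reals_cnj_iff complex_is_Real_iff)

lemma cinner_self_real: "cinner (x::'a::complex_inner) x = complex_of_real (Re (cinner x x))"
  using cinner_self_Im by (simp add: complex_eq_iff)

lemma norm_sq_cinner: "(norm (x::'a::complex_inner))^2 = Re (cinner x x)"
  using norm_eq_sqrt_cinner[of x] cinner_self_nonneg[of x] by simp

lemma scaleC_zero_right [simp]: "scaleC c (0::'a::complex_inner) = 0"
  using scaleC_add_right[of c 0 0] by simp

lemma scaleC_zero_left [simp]: "scaleC 0 (x::'a::complex_inner) = 0"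
  using scaleC_of_real[of 0 x] by simp

lemma scaleC_minus_right: "scaleC c (- (x::'a::complex_inner)) = - scaleC c x"
  by (metis add.right_inverse add_eq_0_iff scaleC_add_right scaleC_zero_right)

lemma scaleC_diff_right: "scaleC c ((x::'a::complex_inner) - y) = scaleC c x - scaleC c y"
  using scaleC_add_right[of c x "-y"] by (simp add: scaleC_minus_right)

lemma sesq_CS:
  fixes B :: "'a::complex_inner \<Rightarrow> 'a \<Rightarrow> complex"
  assumes add: "\<And>x y z. B (x + y) z = B x z + B y z"
    and sc: "\<And>c x y. B (scaleC c x) y = c * B x y"
    and herm: "\<And>x y. B x y = cnj (B y x)"
    and pos: "\<And>x. 0 \<le> Re (B x x)"
  shows "(cmod (B x y))^2 \<le> Re (B x x) * Re (B y y)"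
proof -
  have addr: "B u (v + w) = B u v + B u w" for u v w
    by (metis add herm complex_cnj_add)
  have scr: "B u (scaleC c v) = cnj c * B u v" for u v c
    by (metis sc herm complex_cnj_mult)
  have realx: "B u u = complex_of_real (Re (B u u))" for u
    using herm[of u u] by (metis Reals_cnj_iff complex_is_Real_iff of_real_Re)
  define b where "b = B x y"
  define \<alpha> where "\<alpha> = Re (B x x)"
  define \<beta> where "\<beta> = Re (B y y)"
  have byx: "B y x = cnj b" using herm b_def by (metis complex_cnj_cnj)
  have byy: "B y y = complex_of_real \<beta>" using realx[of y] \<beta>_def by metis
  have key: "0 \<le> \<alpha> - 2 * r * (cmod b)^2 + r^2 * (cmod b)^2 * \<beta>" for r :: real
  proof -
    define t where "t = - (complex_of_real r * b)"
    have e: "B (x + scaleC t y) (x + scaleC t y) = (B x x + cnj t * b) + t * (cnj b + cnj t * B y y)"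
      apply (simp only: add addr sc scr byx b_def) by (simp add: algebra_simps)
    have r1: "Re (cnj t * b) = - r * (cmod b)^2" unfolding t_def cmod_power2
      by (simp add: power2_eq_square algebra_simps)
    have r2: "Re (t * cnj b) = - r * (cmod b)^2" unfolding t_def cmod_power2
      by (simp add: power2_eq_square algebra_simps)
    have r3: "Re (t * (cnj t * complex_of_real \<beta>)) = r^2 * (cmod b)^2 * \<beta>" unfolding t_def cmod_power2
      by (simp add: power2_eq_square algebra_simps)
    have "Re (B (x + scaleC t y) (x + scaleC t y)) = \<alpha> - 2 * r * (cmod b)^2 + r^2 * (cmod b)^2 * \<beta>"
      unfolding e byy using r1 r2 r3 by (simp add: \<alpha>_def ring_distribs)
    then show ?thesis using pos[of "x + scaleC t y"] by simp
  qed
  show ?thesis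
  proof (cases "\<beta> > 0")
    case True
    have "0 \<le> \<alpha> - 2 * (1/\<beta>) * (cmod b)^2 + (1/\<beta>)^2 * (cmod b)^2 * \<beta>" by (rule key)
    then have "0 \<le> \<alpha> - (cmod b)^2 / \<beta>" using True by (simp add: power2_eq_square field_simps)
    then show ?thesis using True by (simp add: b_def \<alpha>_def \<beta>_def field_simps)
  next
    case False
    then have b0: "\<beta> = 0" using pos[of y] \<beta>_def by simp
    show ?thesis
    proof (rule ccontr)
      assume "\<not> ?thesis"
      then have pb: "(cmod b)^2 > 0" using b0 b_def \<beta>_def by simp
      have "0 \<le> \<alpha> - 2 * ((\<alpha>+1) / (2 * (cmod b)^2)) * (cmod b)^2" using key[of "(\<alpha>+1) / (2 * (cmod b)^2)"] b0 by simp
      then show False using pb by (simp add: field_simps)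
    qed
  qed
qed

lemma scaleC_minus_left: "scaleC (- c) (x::'a::complex_inner) = - scaleC c x"
  by (metis add.right_inverse add_eq_0_iff scaleC_add_left scaleC_zero_left)

lemma sesq_expand:
  fixes B :: "'a::complex_inner \<Rightarrow> 'a \<Rightarrow> complex"
  assumes add: "\<And>x y z. B (x + y) z = B x z + B y z"
    and sc: "\<And>c x y. B (scaleC c x) y = c * B x y"
    and herm: "\<And>x y. B x y = cnj (B y x)"
  shows "Re (B (x + scaleC (- (complex_of_real r * B x y)) y) (x + scaleC (- (complex_of_real r * B x y)) y))
     = Re (B x x) - 2 * r * (cmod (B x y))^2 + r^2 * (cmod (B x y))^2 * Re (B y y)"
proof -
  have addr: "B u (v + w) = B u v + B u w" for u v w
    by (metis add herm complex_cnj_add)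
  have scr: "B u (scaleC c v) = cnj c * B u v" for u v c
    by (metis sc herm complex_cnj_mult)
  have realx: "B u u = complex_of_real (Re (B u u))" for u
    using herm[of u u] by (metis Reals_cnj_iff complex_is_Real_iff of_real_Re)
  define b where "b = B x y"
  define \<beta> where "\<beta> = Re (B y y)"
  define t where "t = - (complex_of_real r * b)"
  have byx: "B y x = cnj b" using herm b_def by (metis complex_cnj_cnj)
  have byy: "B y y = complex_of_real \<beta>" using realx[of y] \<beta>_def by metis
  have e: "B (x + scaleC t y) (x + scaleC t y) = (B x x + cnj t * b) + t * (cnj b + cnj t * B y y)"
    apply (simp only: add addr sc scr byx b_def) by (simp add: algebra_simps)
  have r1: "Re (cnj t * b) = - r * (cmod b)^2" unfolding t_def cmod_power2
    by (simp add: power2_eq_square algebra_simps)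
  have r2: "Re (t * cnj b) = - r * (cmod b)^2" unfolding t_def cmod_power2
    by (simp add: power2_eq_square algebra_simps)
  have r3: "Re (t * (cnj t * complex_of_real \<beta>)) = r^2 * (cmod b)^2 * \<beta>" unfolding t_def cmod_power2
    by (simp add: power2_eq_square algebra_simps)
  have "Re (B (x + scaleC t y) (x + scaleC t y)) = Re (B x x) - 2 * r * (cmod b)^2 + r^2 * (cmod b)^2 * \<beta>"
    unfolding e byy using r1 r2 r3 by (simp add: ring_distribs)
  then show ?thesis unfolding t_def b_def \<beta>_def .
qed

lemma cinner_CS: "cmod (cinner (x::'a::complex_inner) y) \<le> norm x * norm y"
proof -
  have "(cmod (cinner x y))^2 \<le> Re (cinner x x) * Re (cinner y y)"
    by (rule sesq_CS) (auto intro: cinner_add_left cinner_scaleC_left cinner_commute cinner_self_nonneg)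
  also have "\<dots> = (norm x * norm y)^2" by (simp add: norm_sq_cinner power_mult_distrib)
  finally show ?thesis by (meson abs_le_square_iff abs_norm_cancel norm_ge_zero power2_le_imp_le mult_nonneg_nonneg)
qed

lemma bounded_clinear_linear:
  assumes "bounded_clinear f" shows "bounded_linear f"
proof -
  have a: "f (x + y) = f x + f y" for x y using assms unfolding bounded_clinear_def by blast
  have s: "f (scaleC c x) = scaleC c (f x)" for c x using assms unfolding bounded_clinear_def by blast
  obtain K where K: "\<forall>x. norm (f x) \<le> norm x * K" using assms unfolding bounded_clinear_def by blast
  show ?thesis
    by (rule bounded_linear_intro[where K=K]) (auto simp: a s scaleR_scaleC K)
qed

lemma functional_bounded_linear:
  fixes S :: "'a::complex_inner \<Rightarrow> 'a"
  assumes "bounded_clinear S"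
  shows "bounded_linear (\<lambda>x. cinner (S x) y)"
proof -
  have a: "S (x + y) = S x + S y" for x y using assms unfolding bounded_clinear_def by blast
  have s: "S (scaleC c x) = scaleC c (S x)" for c x using assms unfolding bounded_clinear_def by blast
  obtain K where K: "\<forall>x. norm (S x) \<le> norm x * K" using assms unfolding bounded_clinear_def by blast
  have "cmod (cinner (S x) y) \<le> norm x * (K * norm y)" for x
  proof -
    have "cmod (cinner (S x) y) \<le> norm (S x) * norm y" by (rule cinner_CS)
    also have "\<dots> \<le> norm x * K * norm y" using K by (simp add: mult_right_mono)
    finally show ?thesis by (simp add: mult.assoc)
  qed
  then show ?thesis
    by (intro bounded_linear_intro[where K="K * norm y"]) (auto simp: a s scaleR_scaleC cinner_add_left cinner_scaleC_left scaleR_conv_of_real)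
qed

lemma projection_exists:
  fixes M :: "'a::chilbert_space set"
  assumes cl: "closed M" and z: "0 \<in> M" and ad: "\<And>u v. u \<in> M \<Longrightarrow> v \<in> M \<Longrightarrow> u + v \<in> M"
    and sm: "\<And>c u. u \<in> M \<Longrightarrow> scaleC c u \<in> M"
  shows "\<exists>p\<in>M. \<forall>m\<in>M. cinner (x - p) m = 0"
proof -
  define D where "D = Inf ((\<lambda>m. (norm (x - m))^2) ` M)"
  have bdd: "bdd_below ((\<lambda>m. (norm (x - m))^2) ` M)" by (rule bdd_belowI[where m=0]) auto
  have Dle: "D \<le> (norm (x - m))^2" if "m \<in> M" for m
    unfolding D_def using bdd that by (simp add: cInf_lower)
  have "\<exists>m\<in>M. (norm (x - m))^2 < D + 1 / real (Suc k)" for k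
  proof -
    have "Inf ((\<lambda>m. (norm (x - m))^2) ` M) < D + 1 / real (Suc k)" unfolding D_def by simp
    from cInf_lessD[OF _ this] z show ?thesis by auto
  qed
  then obtain mm where mm: "\<And>k. mm k \<in> M" "\<And>k. (norm (x - mm k))^2 < D + 1 / real (Suc k)"
    by metis
  have para: "(norm (a + b))^2 + (norm (a - b))^2 = 2 * (norm a)^2 + 2 * (norm (b::'a))^2" for a b
    by (simp add: norm_sq_cinner cinner_add_left cinner_add_right cinner_diff_left cinner_diff_right scaleR_2)
  have mid: "(norm (mm i - mm j))^2 \<le> 2 / real (Suc i) + 2 / real (Suc j)" for i j
  proof -
    define c where "c = scaleR (1/2) (mm i + mm j)"
    have cM: "c \<in> M" unfolding c_def scaleR_scaleC using mm(1) ad sm by blast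
    have "(x - mm i) + (x - mm j) = scaleR 2 (x - c)" unfolding c_def by (simp add: algebra_simps scaleR_2)
    then have n1: "(norm ((x - mm i) + (x - mm j)))^2 = 4 * (norm (x - c))^2"
      by (simp add: power2_eq_square)
    have n2: "(x - mm i) - (x - mm j) = mm j - mm i" by simp
    have "(norm (mm j - mm i))^2 = 2 * (norm (x - mm i))^2 + 2 * (norm (x - mm j))^2 - 4 * (norm (x - c))^2"
      using para[of "x - mm i" "x - mm j"] n1 n2 by simp
    also have "\<dots> \<le> 2 / real (Suc i) + 2 / real (Suc j)" using mm(2)[of i] mm(2)[of j] Dle[OF cM] by simp
    finally show ?thesis by (simp add: norm_minus_commute)
  qed
  have "Cauchy mm"
  proof (rule CauchyI)
    fix e :: real assume e: "0 < e"
    obtain N :: nat where N: "4 / e^2 < real N" using reals_Archimedean2 by blast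
    have "norm (mm m - mm n) < e" if "m \<ge> N" "n \<ge> N" for m n
    proof -
      have "(norm (mm m - mm n))^2 \<le> 2 / real (Suc m) + 2 / real (Suc n)" by (rule mid)
      also have "\<dots> \<le> 2 / real (Suc N) + 2 / real (Suc N)"
        using that by (intro add_mono divide_left_mono) auto
      also have "\<dots> < e^2"
      proof -
        have "4 < e^2 * real (Suc N)" using N e by (simp add: field_simps) (smt (verit) zero_less_power)
        then have "4 / real (Suc N) < e^2" using pos_divide_less_eq[of "real (Suc N)" 4 "e^2"] by simp
        moreover have "2 / real (Suc N) + 2 / real (Suc N) = 4 / real (Suc N)" by (simp add: add_divide_distrib[symmetric])
        ultimately show ?thesis by simp
      qed
      finally have h: "(norm (mm m - mm n))^2 < e^2" .
      show ?thesis using power2_less_imp_less[OF h] e by linarith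
    qed
    then show "\<exists>M. \<forall>m\<ge>M. \<forall>n\<ge>M. norm (mm m - mm n) < e" by blast
  qed
  then obtain p where p: "mm \<longlonglongrightarrow> p" using Cauchy_convergent_iff convergent_def by blast
  have pM: "p \<in> M" by (rule closed_sequentially[OF cl mm(1) p])
  have "(\<lambda>k. (norm (x - mm k))^2) \<longlonglongrightarrow> (norm (x - p))^2"
    by (intro tendsto_intros p)
  moreover have "(\<lambda>k. D + 1 / real (Suc k)) \<longlonglongrightarrow> D"
  proof -
    have "(\<lambda>k. D + inverse (real (Suc k))) \<longlonglongrightarrow> D + 0"
      by (intro tendsto_add tendsto_const LIMSEQ_inverse_real_of_nat)
    then show ?thesis by (simp add: inverse_eq_divide)
  qed
  ultimately have pD: "(norm (x - p))^2 \<le> D"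
    by (rule LIMSEQ_le) (use mm(2) in \<open>auto intro: less_imp_le\<close>)
  show ?thesis
  proof (intro bexI[OF _ pM] ballI)
    fix m assume mM: "m \<in> M"
    define e where "e = x - p"
    define b where "b = cinner e m"
    define r where "r = 1 / ((norm m)^2 + 1)"
    have "0 < (norm m)^2 + 1" using zero_le_power2[of "norm m"] by linarith
    then have rpos: "r > 0" unfolding r_def by simp
    define t where "t = - (complex_of_real r * b)"
    have qM: "p + scaleC (- t) m \<in> M" using ad sm pM mM by blast
    have xq: "x - (p + scaleC (- t) m) = e + scaleC t m" unfolding e_def scaleC_minus_left by simp
    have "Re (cinner (e + scaleC t m) (e + scaleC t m)) = Re (cinner e e) - 2 * r * (cmod b)^2 + r^2 * (cmod b)^2 * Re (cinner m m)"
      unfolding t_def b_def by (rule sesq_expand) (auto intro: cinner_add_left cinner_scaleC_left cinner_commute)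
    moreover have "Re (cinner e e) \<le> Re (cinner (e + scaleC t m) (e + scaleC t m))"
      using pD Dle[OF qM] xq unfolding e_def by (simp add: norm_sq_cinner)
    ultimately have "0 \<le> - 2 * r * (cmod b)^2 + r^2 * (cmod b)^2 * (norm m)^2"
      unfolding norm_sq_cinner[of m] by linarith
    also have "\<dots> = r * (cmod b)^2 * (r * (norm m)^2 - 2)" by (simp add: algebra_simps power2_eq_square)
    finally have "0 \<le> r * (cmod b)^2 * (r * (norm m)^2 - 2)" .
    moreover have "r * (norm m)^2 < 1"
    proof -
      have pos1: "0 < 1 + (norm m)^2" using zero_le_power2[of "norm m"] by linarith
      then show ?thesis unfolding r_def by (simp add: divide_less_eq)
    qed
    ultimately have prodnn: "0 \<le> r * (cmod b)^2 * (r * (norm m)^2 - 2)" and neg: "r * (norm m)^2 - 2 < 0"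
      by linarith+
    have "(cmod b)^2 \<le> 0"
    proof (rule ccontr)
      assume "\<not> (cmod b)^2 \<le> 0"
      then have "0 < r * (cmod b)^2" using rpos by simp
      then have "r * (cmod b)^2 * (r * (norm m)^2 - 2) < 0" using neg mult_pos_neg by blast
      then show False using prodnn by linarith
    qed
    then show "cinner (x - p) m = 0" unfolding b_def e_def by simp
  qed
qed

lemma cinner_ext:
  fixes a b :: "'a::complex_inner"
  assumes "\<And>x. cinner x a = cinner x b" shows "a = b"
proof -
  have "cinner (a - b) (a - b) = 0" using assms[of "a - b"] by (simp add: cinner_diff_right)
  then show ?thesis by (metis cinner_self_eq_zero eq_iff_diff_eq_0)
qed

lemma riesz:
  fixes \<phi> :: "'a::chilbert_space \<Rightarrow> complex"
  assumes bl: "bounded_linear \<phi>" and sc: "\<And>c x. \<phi> (scaleC c x) = c * \<phi> x"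
  shows "\<exists>w. \<forall>x. \<phi> x = cinner x w"
proof (cases "\<forall>x. \<phi> x = 0")
  case True then show ?thesis by (intro exI[of _ 0]) simp
next
  case False
  then obtain v where v: "\<phi> v \<noteq> 0" by blast
  define N where "N = {x. \<phi> x = 0}"
  have cl: "closed N" unfolding N_def
    by (intro closed_Collect_eq linear_continuous_on bl continuous_on_const)
  have z: "0 \<in> N" using bl N_def by (simp add: linear_simps)
  have ad: "u + w \<in> N" if "u \<in> N" "w \<in> N" for u w
    using bl that N_def by (simp add: linear_simps)
  have sm: "scaleC c u \<in> N" if "u \<in> N" for c u using sc[of c u] that N_def by simp
  obtain p where pN: "p \<in> N" and orth: "\<forall>m\<in>N. cinner (v - p) m = 0"
    using projection_exists[OF cl z ad sm] by blast
  define u where "u = v - p"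
  have phiu: "\<phi> u = \<phi> v" using bl pN N_def u_def by (simp add: linear_simps)
  have u0: "u \<noteq> 0" using phiu v bl by (auto simp: linear_simps)
  have uu: "cinner u u \<noteq> 0" using u0 cinner_self_eq_zero by blast
  have "\<phi> x = cinner x (scaleC (cnj (\<phi> u / cinner u u)) u)" for x
  proof -
    define n where "n = scaleC (\<phi> u) x - scaleC (\<phi> x) u"
    have "\<phi> n = \<phi> u * \<phi> x - \<phi> x * \<phi> u"
      unfolding n_def using bl sc by (simp add: linear_simps)
    then have "n \<in> N" unfolding N_def by simp
    then have "cinner u n = 0" using orth u_def by simp
    then have "cinner n u = 0" using cinner_commute[of n u] by simp
    then have "\<phi> u * cinner x u - \<phi> x * cinner u u = 0"
      by (simp add: n_def cinner_diff_left cinner_scaleC_left)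
    then show ?thesis using uu by (simp add: cinner_scaleC_right field_simps)
  qed
  then show ?thesis by blast
qed

lemma adj_prop:
  fixes S :: "'a::chilbert_space \<Rightarrow> 'a"
  assumes bc: "bounded_clinear S"
  shows "cinner (S x) y = cinner x (adj S y)"
proof -
  have sc: "S (scaleC c x) = scaleC c (S x)" for c x using bc unfolding bounded_clinear_def by blast
  have "\<forall>y. \<exists>w. \<forall>x. cinner (S x) y = cinner x w"
  proof
    fix y
    show "\<exists>w. \<forall>x. cinner (S x) y = cinner x w"
      by (rule riesz[OF functional_bounded_linear[OF bc]]) (simp add: sc cinner_scaleC_left)
  qed
  then obtain T where T: "\<And>x y. cinner (S x) y = cinner x (T y)" by metis
  have "adj S = T" unfolding adj_def
  proof (rule the_equality)
    show "\<forall>x y. cinner (S x) y = cinner x (T y)" using T by blast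
    fix T' assume "\<forall>x y. cinner (S x) y = cinner x (T' y)"
    then show "T' = T" using T by (intro ext cinner_ext) metis
  qed
  then show ?thesis using T by simp
qed

context
  fixes A :: "'a::chilbert_space \<Rightarrow> 'a"
  assumes posA: "positive_op A"
begin

lemma A_bc: "bounded_clinear A" using posA unfolding positive_op_def by blast
lemma A_add: "A (x + y) = A x + A y" using A_bc unfolding bounded_clinear_def by blast
lemma A_sc: "A (scaleC c x) = scaleC c (A x)" using A_bc unfolding bounded_clinear_def by blast
lemma A_bl: "bounded_linear A" by (rule bounded_clinear_linear[OF A_bc])
lemma A_diff: "A (x - y) = A x - A y" using A_bl by (simp add: linear_simps)
lemma A_zero: "A 0 = 0" using A_bl by (simp add: linear_simps)
lemma A_Im: "Im (cinner (A x) x) = 0" using posA unfolding positive_op_def by blast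
lemma A_Re: "0 \<le> Re (cinner (A x) x)" using posA unfolding positive_op_def by blast

lemma A_herm: "cinner (A x) y = cinner x (A y)"
proof -
  define B where "B u v = cinner (A u) v" for u v
  have e1: "B (x + y) (x + y) = B x x + B x y + B y x + B y y"
    unfolding B_def by (simp add: A_add cinner_add_left cinner_add_right)
  have e2: "B (x + scaleC \<i> y) (x + scaleC \<i> y) = B x x + cnj \<i> * B x y + \<i> * B y x + \<i> * cnj \<i> * B y y"
    unfolding B_def by (simp add: A_add A_sc cinner_add_left cinner_add_right cinner_scaleC_left cinner_scaleC_right algebra_simps)
  have i1: "Im (B u u) = 0" for u unfolding B_def by (rule A_Im)
  have "Im (B x y) + Im (B y x) = 0" using i1[of "x + y"] e1 i1[of x] i1[of y] by simp
  moreover have "- Re (B x y) + Re (B y x) = 0" using i1[of "x + scaleC \<i> y"] e2 i1[of x] i1[of y] by simp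
  ultimately have "B x y = cnj (B y x)" by (simp add: complex_eq_iff)
  then show ?thesis unfolding B_def by (metis cinner_commute)
qed

lemma A_CS_sq: "(cmod (cinner (A x) y))^2 \<le> Re (cinner (A x) x) * Re (cinner (A y) y)"
  by (rule sesq_CS[where B="\<lambda>u v. cinner (A u) v"])
     (auto simp: A_add A_sc cinner_add_left cinner_scaleC_left A_Re intro: A_herm, metis A_herm cinner_commute)

lemma anorm_sq: "(anorm A x)^2 = Re (cinner (A x) x)"
  unfolding anorm_def using A_Re by simp

lemma anorm_nonneg: "0 \<le> anorm A x" unfolding anorm_def using A_Re by simp

lemma A_CS: "cmod (cinner (A x) y) \<le> anorm A x * anorm A y"
proof -
  have "(cmod (cinner (A x) y))^2 \<le> (anorm A x * anorm A y)^2"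
    using A_CS_sq by (simp add: anorm_sq power_mult_distrib)
  then show ?thesis using anorm_nonneg by (meson mult_nonneg_nonneg power2_le_imp_le)
qed

lemma anorm_triangle: "anorm A (x + y) \<le> anorm A x + anorm A y"
proof -
  have "(anorm A (x + y))^2 = (anorm A x)^2 + (anorm A y)^2 + Re (cinner (A x) y) + Re (cinner (A y) x)"
    by (simp add: anorm_sq A_add cinner_add_left cinner_add_right)
  also have "\<dots> \<le> (anorm A x)^2 + (anorm A y)^2 + 2 * (anorm A x * anorm A y)"
    using A_CS[of x y] A_CS[of y x] complex_Re_le_cmod[of "cinner (A x) y"] complex_Re_le_cmod[of "cinner (A y) x"]
    by (simp add: mult.commute)
  also have "\<dots> = (anorm A x + anorm A y)^2" by (simp add: power2_eq_square algebra_simps)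
  finally show ?thesis using anorm_nonneg by (meson add_nonneg_nonneg power2_le_imp_le)
qed

lemma mp_inv_prop: "A (mp_inv A (A w)) = A w"
proof -
  define N where "N = {x. A x = 0}"
  have cl: "closed N" unfolding N_def
    by (intro closed_Collect_eq linear_continuous_on A_bl continuous_on_const)
  have z: "0 \<in> N" using A_zero N_def by simp
  have ad: "u + v \<in> N" if "u \<in> N" "v \<in> N" for u v using that N_def by (simp add: A_add)
  have sm: "scaleC c u \<in> N" if "u \<in> N" for c u using that N_def by (simp add: A_sc)
  obtain p where pN: "p \<in> N" and orth: "\<forall>m\<in>N. cinner (w - p) m = 0"
    using projection_exists[OF cl z ad sm] by blast
  define y0 where "y0 = w - p"
  have Ay0: "A y0 = A w" using pN N_def y0_def by (simp add: A_diff)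
  have "mp_inv A (A w) = y0" unfolding mp_inv_def
  proof (rule the_equality)
    show "(\<forall>v. A v = 0 \<longrightarrow> cinner y0 v = 0) \<and> A y0 = A w"
      using orth Ay0 unfolding N_def y0_def by auto
    fix y assume y: "(\<forall>v. A v = 0 \<longrightarrow> cinner y v = 0) \<and> A y = A w"
    have d: "A (y - y0) = 0" using y Ay0 by (simp add: A_diff)
    have "cinner y (y - y0) = 0" using y d by blast
    moreover have "cinner y0 (y - y0) = 0" using orth d unfolding N_def y0_def by blast
    ultimately have "cinner (y - y0) (y - y0) = 0" by (simp add: cinner_diff_left)
    then show "y = y0" by (metis cinner_self_eq_zero eq_iff_diff_eq_0)
  qed
  then show ?thesis using Ay0 by simp
qed

end

lemma bc_bound_pos:
  assumes "bounded_clinear f"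
  shows "\<exists>K>0. \<forall>x. norm (f x) \<le> norm x * K"
proof -
  obtain K where K: "\<forall>x. norm (f x) \<le> norm x * K" using assms unfolding bounded_clinear_def by blast
  have "norm (f x) \<le> norm x * max K 1" for x
    using K[rule_format, of x] by (meson max.cobounded1 mult_left_mono norm_ge_zero order_trans)
  then show ?thesis by (intro exI[of _ "max K 1"]) auto
qed

context
  fixes A S R :: "'a::chilbert_space \<Rightarrow> 'a"
  assumes posA: "positive_op A" and bcS: "bounded_clinear S" and bcR: "bounded_clinear R"
    and AR: "\<And>x. A (R x) = adj S (A x)"
begin

lemma G: "cinner (A (R u)) v = cinner (A u) (S v)"
proof -
  have "cinner (S v) (A u) = cinner v (adj S (A u))" by (rule adj_prop[OF bcS])
  then show ?thesis by (metis AR cinner_commute)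
qed

lemma Sh_A: "A (sharpA A S u) = A (R u)"
proof -
  have "sharpA A S u = mp_inv A (A (R u))" unfolding sharpA_def by (simp add: AR)
  then show ?thesis using mp_inv_prop[OF posA] by simp
qed

lemma F1: "cinner (A (sharpA A S u)) v = cinner (A u) (S v)"
  by (simp add: Sh_A G)

lemma F2: "cinner (A u) (sharpA A S v) = cinner (A (S u)) v"
proof -
  have "cinner (A u) (sharpA A S v) = cnj (cinner (A (sharpA A S v)) u)"
    by (metis A_herm[OF posA] cinner_commute)
  also have "\<dots> = cnj (cinner (A v) (S u))" by (simp add: F1)
  also have "\<dots> = cinner (S u) (A v)" by (metis cinner_commute)
  also have "\<dots> = cinner (A (S u)) v" by (metis A_herm[OF posA])
  finally show ?thesis .
qed

lemma Psym: "cinner (A (R (S u))) v = cinner (A u) (R (S v))"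
proof -
  have "cinner (A u) (R (S v)) = cnj (cinner (A (R (S v))) u)"
    by (metis A_herm[OF posA] cinner_commute)
  also have "\<dots> = cnj (cinner (A (S v)) (S u))" by (simp add: G)
  also have "\<dots> = cinner (S u) (A (S v))" by (metis cinner_commute)
  also have "\<dots> = cinner (A (S u)) (S v)" by (metis A_herm[OF posA])
  also have "\<dots> = cinner (A (R (S u))) v" by (simp add: G)
  finally show ?thesis by simp
qed

lemma Pnsym: "cinner (A (((\<lambda>x. R (S x)) ^^ n) u)) v = cinner (A u) (((\<lambda>x. R (S x)) ^^ n) v)"
proof (induction n arbitrary: u v)
  case 0 then show ?case by simp
next
  case (Suc n)
  have "cinner (A (((\<lambda>x. R (S x)) ^^ Suc n) u)) v = cinner (A (((\<lambda>x. R (S x)) ^^ n) u)) (R (S v))"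
    by (simp add: Psym)
  also have "\<dots> = cinner (A u) (((\<lambda>x. R (S x)) ^^ n) (R (S v)))" by (rule Suc.IH)
  also have "\<dots> = cinner (A u) (((\<lambda>x. R (S x)) ^^ Suc n) v)" by (simp only: funpow_Suc_right comp_def)
  finally show ?case .
qed

lemma S_abound: "\<exists>K\<ge>0. \<forall>x. anorm A (S x) \<le> K * anorm A x"
proof -
  define P where "P = (\<lambda>x. R (S x))"
  obtain Ks where Ks: "Ks > 0" "\<And>x. norm (S x) \<le> norm x * Ks" using bc_bound_pos[OF bcS] by blast
  obtain Kr where Kr: "Kr > 0" "\<And>x. norm (R x) \<le> norm x * Kr" using bc_bound_pos[OF bcR] by blast
  obtain Ka where Ka: "Ka > 0" "\<And>x. norm (A x) \<le> norm x * Ka" using bc_bound_pos[OF A_bc[OF posA]] by blast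
  define Kp where "Kp = Ks * Kr"
  have Kp: "Kp > 0" using Ks Kr Kp_def by simp
  have Pb: "norm (P x) \<le> norm x * Kp" for x
  proof -
    have "norm (P x) \<le> norm (S x) * Kr" unfolding P_def by (rule Kr(2))
    also have "\<dots> \<le> norm x * Ks * Kr" using Ks(2)[of x] Kr(1) by (simp add: mult_right_mono)
    finally show ?thesis by (simp add: Kp_def mult.assoc)
  qed
  have Pnb: "norm ((P ^^ n) x) \<le> Kp ^ n * norm x" for n x
  proof (induction n)
    case 0 then show ?case by simp
  next
    case (Suc n)
    have "norm ((P ^^ Suc n) x) \<le> norm ((P ^^ n) x) * Kp" using Pb by simp
    also have "\<dots> \<le> Kp ^ n * norm x * Kp" using Suc.IH Kp by (simp add: mult_right_mono)
    finally show ?case by (simp add: algebra_simps)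
  qed
  define Ca where "Ca = sqrt Ka"
  have anle: "anorm A z \<le> Ca * norm z" for z
  proof -
    have "(anorm A z)^2 = Re (cinner (A z) z)" by (rule anorm_sq[OF posA])
    also have "\<dots> \<le> cmod (cinner (A z) z)" by (rule complex_Re_le_cmod)
    also have "\<dots> \<le> norm (A z) * norm z" by (rule cinner_CS)
    also have "\<dots> \<le> norm z * Ka * norm z" using Ka(2)[of z] by (simp add: mult_right_mono)
    also have "\<dots> = (Ca * norm z)^2" using Ka(1) by (simp add: Ca_def power_mult_distrib power2_eq_square)
    finally show ?thesis using Ka(1) Ca_def by (meson mult_nonneg_nonneg norm_ge_zero power2_le_imp_le real_sqrt_ge_zero less_imp_le)
  qed
  have Ca0: "Ca \<ge> 0" using Ka(1) Ca_def by simp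
  have main: "anorm A (P x) \<le> Kp * anorm A x" for x
  proof -
    define g where "g n = anorm A ((P ^^ n) x)" for n
    have g0: "g n \<ge> 0" for n unfolding g_def by (rule anorm_nonneg[OF posA])
    have gsq: "(g m)^2 \<le> g 0 * g (m + m)" for m
    proof -
      have "(g m)^2 = Re (cinner (A ((P ^^ m) x)) ((P ^^ m) x))" unfolding g_def by (rule anorm_sq[OF posA])
      also have "\<dots> = Re (cinner (A x) ((P ^^ m) ((P ^^ m) x)))" unfolding P_def by (simp only: Pnsym)
      also have "\<dots> \<le> cmod (cinner (A x) ((P ^^ m) ((P ^^ m) x)))" by (rule complex_Re_le_cmod)
      also have "\<dots> \<le> anorm A x * anorm A ((P ^^ m) ((P ^^ m) x))" by (rule A_CS[OF posA])
      also have "\<dots> = g 0 * g (m + m)" unfolding g_def by (simp add: funpow_add)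
      finally show ?thesis .
    qed
    have "g 1 \<le> Kp * g 0"
    proof (cases "g 0 = 0")
      case True
      then have "(g 1)^2 \<le> 0" using gsq[of 1] by simp
      then have "g 1 = 0" using g0[of 1] by simp
      then show ?thesis using True by simp
    next
      case False
      then have gp: "g 0 > 0" using g0[of 0] by simp
      have C: "(g 1)^(2^n) * g 0 \<le> g (2^n) * (g 0)^(2^n)" for n
      proof (induction n)
        case 0 then show ?case by (simp add: mult.commute)
      next
        case (Suc n)
        define N where "N = (2::nat)^n"
        have IH: "(g 1)^N * g 0 \<le> g N * (g 0)^N" using Suc.IH N_def by simp
        have "((g 1)^N * g 0)^2 \<le> (g N * (g 0)^N)^2"
          using IH g0 by (intro power_mono) auto
        then have "(g 1)^(2*N) * (g 0)^2 \<le> (g N)^2 * (g 0)^(2*N)"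
          by (simp add: power_mult_distrib power_mult[symmetric] mult.commute)
        also have "\<dots> \<le> g 0 * g (N + N) * (g 0)^(2*N)"
          using gsq[of N] g0 by (intro mult_right_mono) auto
        finally have "g 0 * ((g 1)^(2*N) * g 0) \<le> g 0 * (g (N + N) * (g 0)^(2*N))"
          by (simp add: power2_eq_square algebra_simps)
        then have "(g 1)^(2*N) * g 0 \<le> g (N + N) * (g 0)^(2*N)"
          using gp by (simp add: mult_le_cancel_left_pos)
        moreover have "2 ^ Suc n = 2 * N" "N + N = 2 * N" using N_def by simp_all
        ultimately show ?case by simp
      qed
      define q where "q = g 1 / (Kp * g 0)"
      define M where "M = Ca * norm x / g 0"
      have qb: "q ^ (2^n) \<le> M" for n
      proof -
        define N where "N = (2::nat)^n"
        have gN: "g N \<le> Ca * (Kp ^ N * norm x)"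
        proof -
          have "g N \<le> Ca * norm ((P ^^ N) x)" unfolding g_def by (rule anle)
          also have "\<dots> \<le> Ca * (Kp ^ N * norm x)" using Pnb Ca0 by (intro mult_left_mono) auto
          finally show ?thesis .
        qed
        have g1q: "g 1 = q * (Kp * g 0)" unfolding q_def using Kp gp by simp
        have "(q^N * (g 0)) * (Kp ^ N * (g 0)^N) = (g 1)^N * g 0"
          unfolding g1q by (simp add: power_mult_distrib algebra_simps)
        also have "\<dots> \<le> g N * (g 0)^N" using C[of n] N_def by simp
        also have "\<dots> \<le> Ca * (Kp ^ N * norm x) * (g 0)^N" using gN gp by (intro mult_right_mono) auto
        also have "\<dots> = (Ca * norm x) * (Kp ^ N * (g 0)^N)" by (simp add: algebra_simps)
        finally have "q^N * g 0 \<le> Ca * norm x" using Kp gp by (simp add: mult_le_cancel_right_pos)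
        then show ?thesis unfolding M_def N_def using gp by (simp add: pos_le_divide_eq)
      qed
      have "q \<le> 1"
      proof (rule ccontr)
        assume "\<not> q \<le> 1"
        then have q1: "1 < q" by simp
        obtain n where n: "M < q ^ n" using real_arch_pow[OF q1] by blast
        have "q ^ n \<le> q ^ (2^n)" using q1 by (intro power_increasing) (auto intro: less_imp_le)
        then show False using n qb[of n] by simp
      qed
      then show ?thesis unfolding q_def using Kp gp by (simp add: divide_le_eq mult.commute)
    qed
    then show ?thesis unfolding g_def by simp
  qed
  have "anorm A (S x) \<le> sqrt Kp * anorm A x" for x
  proof -
    have "(anorm A (S x))^2 = Re (cinner (A (S x)) (S x))" by (rule anorm_sq[OF posA])
    also have "\<dots> = Re (cinner (A (P x)) x)" unfolding P_def by (simp add: G)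
    also have "\<dots> \<le> cmod (cinner (A (P x)) x)" by (rule complex_Re_le_cmod)
    also have "\<dots> \<le> anorm A (P x) * anorm A x" by (rule A_CS[OF posA])
    also have "\<dots> \<le> Kp * anorm A x * anorm A x" using main anorm_nonneg[OF posA] by (intro mult_right_mono) auto
    also have "\<dots> = (sqrt Kp * anorm A x)^2" using Kp by (simp add: power_mult_distrib power2_eq_square)
    finally show ?thesis using Kp anorm_nonneg[OF posA]
      by (meson mult_nonneg_nonneg power2_le_imp_le real_sqrt_ge_zero less_imp_le)
  qed
  then show ?thesis using Kp by (intro exI[of _ "sqrt Kp"]) auto
qed

lemma Sh_abound: "\<exists>K\<ge>0. \<forall>x. anorm A (S x) \<le> K * anorm A x \<and> anorm A (sharpA A S x) \<le> K * anorm A x"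
proof -
  obtain K where K: "K \<ge> 0" "\<And>x. anorm A (S x) \<le> K * anorm A x" using S_abound by blast
  have "anorm A (sharpA A S y) \<le> K * anorm A y" for y
  proof -
    define w where "w = sharpA A S y"
    have "(anorm A w)^2 = Re (cinner (A w) w)" by (rule anorm_sq[OF posA])
    also have "\<dots> = Re (cinner (A y) (S w))" unfolding w_def by (simp add: F1)
    also have "\<dots> \<le> cmod (cinner (A y) (S w))" by (rule complex_Re_le_cmod)
    also have "\<dots> \<le> anorm A y * anorm A (S w)" by (rule A_CS[OF posA])
    also have "\<dots> \<le> anorm A y * (K * anorm A w)" using K anorm_nonneg[OF posA] by (intro mult_left_mono) auto
    finally have h: "(anorm A w)^2 \<le> (K * anorm A y) * anorm A w" by (simp add: algebra_simps)
    show ?thesis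
    proof (cases "anorm A w = 0")
      case True then show ?thesis using K anorm_nonneg[OF posA] unfolding w_def by simp
    next
      case False
      then have "anorm A w > 0" using anorm_nonneg[OF posA, of w] by simp
      then show ?thesis using h unfolding w_def by (simp add: power2_eq_square mult_le_cancel_right_pos)
    qed
  qed
  then show ?thesis using K by blast
qed

end


lemma set_bdd:
  assumes "\<And>z. P z \<Longrightarrow> f z \<le> (M::real)"
  shows "bdd_above ({0} \<union> {f z | z. P z})"
  using assms by (intro bdd_aboveI[where M="max M 0"]) (auto simp: le_max_iff_disj)

lemma set_upper:
  assumes "\<And>z. P z \<Longrightarrow> f z \<le> (M::real)" and "P z"
  shows "f z \<le> Sup ({0} \<union> {f z | z. P z})"
  by (rule cSup_upper[OF _ set_bdd[OF assms(1)]]) (use assms(2) in blast)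

lemma set_nonneg:
  assumes "\<And>z. P z \<Longrightarrow> f z \<le> (M::real)"
  shows "0 \<le> Sup ({0} \<union> {f z | z. P z})"
  by (rule cSup_upper[OF _ set_bdd[OF assms(1)]]) blast

lemma A_real:
  fixes A :: "'a::chilbert_space \<Rightarrow> 'a"
  assumes "positive_op A"
  shows "cinner (A w) w = complex_of_real ((anorm A w)^2)"
  using A_Im[OF assms, of w] anorm_sq[OF assms, of w] by (simp add: complex_eq_iff)

theorem corollary2p4:
  fixes A S :: "'a::chilbert_space \<Rightarrow> 'a"
  assumes "positive_op A"
    and "S \<in> BA A"
  shows "(domegaA A S)\<^sup>2 \<le>
           (omegaA A (\<lambda>x. (sharpA A S \<circ> S) x + S x))\<^sup>2
           + opnormA A (\<lambda>x. (sharpA A S \<circ> S) ((sharpA A S \<circ> S) x) + (sharpA A S \<circ> S) x)"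
proof -
  note posA = assms(1)
  from assms(2) obtain R where bcS: "bounded_clinear S" and bcR: "bounded_clinear R"
    and ARf: "A \<circ> R = adj S \<circ> A" unfolding BA_def by blast
  have AR: "A (R x) = adj S (A x)" for x using ARf by (metis comp_apply)
  obtain K where K: "K \<ge> 0" "\<And>x. anorm A (S x) \<le> K * anorm A x" "\<And>x. anorm A (sharpA A S x) \<le> K * anorm A x"
    using Sh_abound[OF posA bcS bcR AR] by blast
  define T where "T x = sharpA A S (S x)" for x
  define W1 where "W1 = (\<lambda>x. (sharpA A S \<circ> S) x + S x)"
  define W2 where "W2 = (\<lambda>x. (sharpA A S \<circ> S) ((sharpA A S \<circ> S) x) + (sharpA A S \<circ> S) x)"
  have W1: "W1 x = T x + S x" and W2: "W2 x = T (T x) + T x" for x by (simp_all add: W1_def W2_def T_def)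
  have an0: "0 \<le> anorm A x" for x by (rule anorm_nonneg[OF posA])
  have aT: "anorm A (T x) \<le> K * K * anorm A x" for x
  proof -
    have "anorm A (T x) \<le> K * anorm A (S x)" unfolding T_def by (rule K(3))
    also have "\<dots> \<le> K * (K * anorm A x)" using K by (intro mult_left_mono) auto
    finally show ?thesis by (simp add: mult.assoc)
  qed
  have b1: "cmod (ainner A (W1 z) z) \<le> K * K + K" if "anorm A z = 1" for z
  proof -
    have "ainner A (W1 z) z = cinner (A (T z)) z + cinner (A (S z)) z"
      unfolding ainner_def W1 by (simp add: A_add[OF posA] cinner_add_left)
    then have "cmod (ainner A (W1 z) z) \<le> cmod (cinner (A (T z)) z) + cmod (cinner (A (S z)) z)"
      by (simp add: norm_triangle_ineq)
    also have "\<dots> \<le> anorm A (T z) * anorm A z + anorm A (S z) * anorm A z"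
      by (intro add_mono A_CS[OF posA])
    also have "\<dots> \<le> K * K + K" using aT[of z] K(2)[of z] that by simp
    finally show ?thesis .
  qed
  have b2: "anorm A (W2 z) \<le> K * K * (K * K) + K * K" if "anorm A z = 1" for z
  proof -
    have "anorm A (W2 z) \<le> anorm A (T (T z)) + anorm A (T z)" unfolding W2 by (rule anorm_triangle[OF posA])
    also have "\<dots> \<le> K * K * (K * K * anorm A z) + K * K * anorm A z"
      using aT[of "T z"] aT[of z] K(1) by (smt (verit) mult_left_mono zero_le_mult_iff)
    finally show ?thesis using that by simp
  qed
  define om where "om = omegaA A W1"
  define op where "op = opnormA A W2"
  have om_ge: "cmod (ainner A (W1 z) z) \<le> om" if "anorm A z = 1" for z
    unfolding om_def omegaA_def by (rule set_upper[where M="K * K + K"]) (use b1 that in auto)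
  have om0: "0 \<le> om" unfolding om_def omegaA_def by (rule set_nonneg[where M="K * K + K"]) (use b1 in auto)
  have op_ge: "anorm A (W2 z) \<le> op" if "anorm A z = 1" for z
    unfolding op_def opnormA_def by (rule set_upper[where M="K * K * (K * K) + K * K"]) (use b2 that in auto)
  have op0: "0 \<le> op" unfolding op_def opnormA_def by (rule set_nonneg[where M="K * K * (K * K) + K * K"]) (use b2 in auto)
  have pt: "(cmod (ainner A (S z) z))\<^sup>2 + (anorm A (S z)) ^ 4 \<le> om^2 + op" if z1: "anorm A z = 1" for z
  proof -
    define s where "s = anorm A (S z)"
    define t where "t = anorm A (T z)"
    define b where "b = cinner (A (S z)) z"
    have s0: "0 \<le> s" and t0: "0 \<le> t" unfolding s_def t_def by (rule an0)+
    have e1: "cinner (A (T z)) z = complex_of_real (s^2)"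
      unfolding T_def s_def F1[OF posA bcS bcR AR] by (rule A_real[OF posA])
    have e2: "cinner (A (T (T z))) z = complex_of_real (t^2)"
    proof -
      have "cinner (A (T (T z))) z = cinner (A (S (T z))) (S z)"
        unfolding T_def[of "T z"] by (rule F1[OF posA bcS bcR AR])
      also have "\<dots> = cinner (A (T z)) (T z)"
        unfolding T_def[of z] by (rule F2[OF posA bcS bcR AR, symmetric])
      also have "\<dots> = complex_of_real (t^2)" unfolding t_def by (rule A_real[OF posA])
      finally show ?thesis .
    qed
    have w1: "ainner A (W1 z) z = complex_of_real (s^2) + b"
      unfolding ainner_def W1 b_def by (simp add: A_add[OF posA] cinner_add_left e1)
    have w2: "ainner A (W2 z) z = complex_of_real (t^2 + s^2)"
      unfolding ainner_def W2 by (simp add: A_add[OF posA] cinner_add_left e1 e2)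
    have cb: "cmod b \<le> s" using A_CS[OF posA, of "S z" z] z1 unfolding b_def s_def by simp
    have ts: "s^2 \<le> t"
    proof -
      have "s^2 = Re (cinner (A (T z)) z)" using e1 by simp
      also have "\<dots> \<le> cmod (cinner (A (T z)) z)" by (rule complex_Re_le_cmod)
      also have "\<dots> \<le> t * anorm A z" unfolding t_def by (rule A_CS[OF posA])
      finally show ?thesis using z1 by simp
    qed
    have tsop: "t^2 + s^2 \<le> op"
    proof -
      have "t^2 + s^2 = Re (ainner A (W2 z) z)" using w2 by simp
      also have "\<dots> \<le> cmod (ainner A (W2 z) z)" by (rule complex_Re_le_cmod)
      also have "\<dots> \<le> anorm A (W2 z) * anorm A z" unfolding ainner_def by (rule A_CS[OF posA])
      also have "\<dots> \<le> op" using op_ge[OF z1] z1 by simp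
      finally show ?thesis .
    qed
    have omb: "(cmod (complex_of_real (s^2) + b))^2 \<le> om^2"
      using om_ge[OF z1] w1 by (intro power_mono) auto
    have reb: "- s \<le> Re b" using cb abs_Re_le_cmod[of b] by linarith
    have k1: "- 2 * s^3 \<le> 2 * s^2 * Re b"
    proof -
      have "s^2 * (- s) \<le> s^2 * Re b" using reb by (intro mult_left_mono) auto
      then show ?thesis by (simp add: power3_eq_cube power2_eq_square algebra_simps)
    qed
    have k2: "s^4 \<le> t^2"
    proof -
      have "(s^2)^2 \<le> t^2" using ts by (intro power_mono) auto
      then show ?thesis by (simp add: power_mult[symmetric])
    qed
    have k3: "0 \<le> s^4 - 2 * s^3 + s^2"
    proof -
      have "s^4 - 2 * s^3 + s^2 = (s^2 - s)^2" by (simp add: power2_eq_square power3_eq_cube power4_eq_xxxx algebra_simps)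
      then show ?thesis by simp
    qed
    have cm1: "(cmod (complex_of_real (s^2) + b))^2 = (s^2 + Re b)^2 + (Im b)^2"
      by (simp add: cmod_power2)
    have cm2: "(cmod b)^2 = (Re b)^2 + (Im b)^2" by (simp add: cmod_power2)
    have "(cmod b)^2 + s^4 \<le> (cmod (complex_of_real (s^2) + b))^2 + (t^2 + s^2)"
      unfolding cm1 cm2 using k1 k2 k3 by (simp add: power2_eq_square power3_eq_cube power4_eq_xxxx algebra_simps)
    also have "\<dots> \<le> om^2 + op" using omb tsop by linarith
    finally show ?thesis unfolding ainner_def s_def b_def .
  qed
  define B where "B = sqrt (om^2 + op)"
  have B0: "0 \<le> B" unfolding B_def using om0 op0 by simp
  have elem: "sqrt ((cmod (ainner A (S z) z))\<^sup>2 + (anorm A (S z)) ^ 4) \<le> B" if "anorm A z = 1" for z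
    unfolding B_def using pt[OF that] by (rule real_sqrt_le_mono)
  have dmle: "domegaA A S \<le> B" unfolding domegaA_def
    by (rule cSup_least) (use elem B0 in auto)
  have dm0: "0 \<le> domegaA A S" unfolding domegaA_def
    by (rule set_nonneg[where M=B]) (use elem in auto)
  have "(domegaA A S)^2 \<le> B^2" using dmle dm0 by (intro power_mono) auto
  also have "\<dots> = om^2 + op" unfolding B_def using om0 op0 by simp
  finally show ?thesis unfolding om_def op_def W1_def W2_def .
qed

end
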